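(* Let $\Pi$ be a cGAP such that no predicate symbol appearing in the head of its VC rule appears in the head of any GAP rule of $\Pi$, and let $S$ be a state for $\Pi$. Then $\mathcal{MM}(\Pi_S)$ is a coherent model of $\Pi$.
   Context: Fix disjoint sets of unary vertex predicate symbols and binary edge predicate symbols; constants are the vertices of a finite social network. An annotation is an element of $[0,1]$, an annotation variable (ranging over $[0,1]$), or $f(t_1,\dots,t_k)$ for an annotation function symbol $f$ denoting a fixed function $[0,1]^k\to[0,1]$ and annotations $t_i$. An annotated atom is $A:\mu$ with $A$ an atom and $\mu$ an annotation; an annotated (GAP) rule has the form $A_0:f(\mu_1,\dots,\mu_n)\leftarrow A_1:\mu_1,\dots,A_n:\mu_n$ ($n=0$: a fact); a GAP is a finite set of such rules. A vertex choice (VC) rule of size $m$ is $b_1(X),\dots,b_m(X)\hookleftarrow a_1(X),\dots,a_m(X)$ with $a_i,b_i$ vertex predicate symbols; its ground instance for vertex $v$ is $b_1(v),\dots,b_m(v)\hookleftarrow a_1(v),\dots,a_m(v)$. A choice GAP (cGAP) $\Pi$ is a finite set of annotated rules plus exactly one VC rule. An interpretation is a map $I$ from ground atoms to $[0,1]$, ordered pointwise ($I_1\preceq I_2$ iff $I_1(A)\le I_2(A)$ for all $A$). $I\models A:\mu$ iff $I(A)\ge\mu$; $I$ satisfies a ground annotated rule iff $I(A_0)$ is at least the head annotation or some body annotated atom is not satisfied; $I$ satisfies a ground VC rule $B_1,\dots,B_m\hookleftarrow A_1,\dots,A_m$ iff there is $i$ with $I(B_i)=I(A_i)$ and $I(B_j)=0$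 for all $j\neq i$; a non-ground rule is satisfied iff all its ground instances are; a model of $\Pi$ satisfies all its rules. Every GAP $P$ has a unique $\preceq$-minimal model, denoted $\mathcal{MM}(P)$. Coherence transform: for an interpretation $I$, ${\rm coh}(\Pi,I)$ is the GAP consisting of all ground non-VC rules of $\Pi$ together with, for each ground VC-rule instance $B_1(v),\dots,B_m(v)\hookleftarrow A_1(v),\dots,A_m(v)$ and each $i$ with $I(A_i(v))>0$ and $I(A_i(v))=I(B_i(v))$, the rule $B_i(v):\mu\leftarrow A_i(v):\mu$. A model $M$ of $\Pi$ is coherent iff $M=\mathcal{MM}({\rm coh}(\Pi,M))$. Game view: each vertex $v$ is a player $\mathcal P_v$ with action set $Q=\{1,\dots,m\}$ ($m$ the size of the VC rule); a state is a map $S$ from players to $Q$. The induced ground GAP $\Pi_S$ is obtained from the grounding of $\Pi$ by replacing each ground VC-rule instance $b_1(v),\dots,b_m(v)\hookleftarrow a_1(v),\dots,a_m(v)$ by the annotated rule $b_i(v):\mu\leftarrow a_i(v):\mu$ with $i=S(\mathcal P_v)$, keeping all ground non-VC rules. *)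

theory Defs
  imports Main "HOL.Real"
begin

text \<open>A function symbol is represented by the fixed function it denotes.\<close>

datatype annot = ACon real | AVar nat | AFun "real list \<Rightarrow> real" "annot list"

fun aval :: "(nat \<Rightarrow> real) \<Rightarrow> annot \<Rightarrow> real" where
  "aval \<sigma> (ACon c) = c"
| "aval \<sigma> (AVar x) = \<sigma> x"
| "aval \<sigma> (AFun f ts) = f (map (aval \<sigma>) ts)"

fun wf_annot :: "annot \<Rightarrow> bool" where
  "wf_annot (ACon c) = (0 \<le> c \<and> c \<le> 1)"
| "wf_annot (AVar x) = True"
| "wf_annot (AFun f ts) =
     ((\<forall>xs. length xs = length ts \<and> set xs \<subseteq> {0..1} \<longrightarrow> f xs \<in> {0..1})
      \<and> (\<forall>t\<in>set ts. wf_annot t))"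

text \<open>Object terms: constants are vertices, variables are indexed by nat.\<close>
datatype 'v trm = Cst 'v | Var nat

text \<open>Atoms: unary vertex predicates (type 'p) and binary edge predicates (type 'e);
 these are disjoint by typing. Ground atoms are ('p,'e,'v) atom, possibly non-ground
 atoms are ('p,'e,'v trm) atom.\<close>
datatype ('p, 'e, 't) atom = VAt 'p 't | EAt 'e 't 't

text \<open>An annotated rule  A0 : f(mu1,...,mun) <- A1:mu1, ..., An:mun ;
 the head annotation is the function f applied to the body annotations.\<close>
datatype ('p, 'e, 't) grule =
  GRule (ghead: "('p, 'e, 't) atom") (gfun: "real list \<Rightarrow> real")
        (gbody: "(('p, 'e, 't) atom \<times> annot) list")

type_synonym ('p, 'e, 'v) prule = "('p, 'e, 'v trm) grule"
type_synonym ('p, 'e, 'v) interp = "('p, 'e, 'v) atom \<Rightarrow> real"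

definition wf_rule :: "('p, 'e, 't) grule \<Rightarrow> bool" where
  "wf_rule r \<longleftrightarrow>
     (\<forall>xs. length xs = length (gbody r) \<and> set xs \<subseteq> {0..1} \<longrightarrow> gfun r xs \<in> {0..1})
     \<and> (\<forall>p\<in>set (gbody r). wf_annot (snd p))"

fun inst :: "(nat \<Rightarrow> 'v) \<Rightarrow> 'v trm \<Rightarrow> 'v" where
  "inst \<theta> (Cst v) = v"
| "inst \<theta> (Var x) = \<theta> x"

definition gatom :: "(nat \<Rightarrow> 'v) \<Rightarrow> ('p, 'e, 'v trm) atom \<Rightarrow> ('p, 'e, 'v) atom" where
  "gatom \<theta> a = map_atom id id (inst \<theta>) a"

definition is_interp :: "('p, 'e, 'v) interp \<Rightarrow> bool" where
  "is_interp I \<longleftrightarrow> (\<forall>A. 0 \<le> I A \<and> I A \<le> 1)"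

definition sat_rule :: "('p, 'e, 'v) interp \<Rightarrow> ('p, 'e, 'v) prule \<Rightarrow> bool" where
  "sat_rule I r \<longleftrightarrow>
     (\<forall>\<theta> \<sigma>. (\<forall>x. 0 \<le> \<sigma> x \<and> \<sigma> x \<le> 1) \<longrightarrow>
        (\<forall>p\<in>set (gbody r). aval \<sigma> (snd p) \<le> I (gatom \<theta> (fst p))) \<longrightarrow>
        gfun r (map (\<lambda>p. aval \<sigma> (snd p)) (gbody r)) \<le> I (gatom \<theta> (ghead r)))"

definition gap_model :: "('p, 'e, 'v) prule set \<Rightarrow> ('p, 'e, 'v) interp \<Rightarrow> bool" where
  "gap_model P I \<longleftrightarrow> is_interp I \<and> (\<forall>r\<in>P. sat_rule I r)"

definition MM :: "('p, 'e, 'v) prule set \<Rightarrow> ('p, 'e, 'v) interp" where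
  "MM P = (THE I. gap_model P I \<and> (\<forall>J. gap_model P J \<and> J \<le> I \<longrightarrow> J = I))"

text \<open>VC rule  b_1(X),...,b_m(X) <-< a_1(X),...,a_m(X): heads list and body list.\<close>
datatype 'p vcrule = VC (vc_heads: "'p list") (vc_body: "'p list")

datatype ('p, 'e, 'v) cgap = CGAP (gap_rules: "('p, 'e, 'v) prule set") (vc_rule: "'p vcrule")

definition vc_size :: "('p, 'e, 'v) cgap \<Rightarrow> nat" where
  "vc_size \<Pi> = length (vc_heads (vc_rule \<Pi>))"

definition wf_cgap :: "('p, 'e, 'v) cgap \<Rightarrow> bool" where
  "wf_cgap \<Pi> \<longleftrightarrow> finite (gap_rules \<Pi>) \<and> (\<forall>r\<in>gap_rules \<Pi>. wf_rule r)
     \<and> length (vc_body (vc_rule \<Pi>)) = length (vc_heads (vc_rule \<Pi>))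
     \<and> distinct (vc_heads (vc_rule \<Pi>))"

definition sat_vc :: "('p, 'e, 'v) interp \<Rightarrow> 'p vcrule \<Rightarrow> bool" where
  "sat_vc I c \<longleftrightarrow>
     (\<forall>v. \<exists>i<length (vc_heads c).
        I (VAt (vc_heads c ! i) v) = I (VAt (vc_body c ! i) v) \<and>
        (\<forall>j<length (vc_heads c). j \<noteq> i \<longrightarrow> I (VAt (vc_heads c ! j) v) = 0))"

definition cgap_model :: "('p, 'e, 'v) cgap \<Rightarrow> ('p, 'e, 'v) interp \<Rightarrow> bool" where
  "cgap_model \<Pi> I \<longleftrightarrow> is_interp I \<and> (\<forall>r\<in>gap_rules \<Pi>. sat_rule I r) \<and> sat_vc I (vc_rule \<Pi>)"

definition ground_inst :: "(nat \<Rightarrow> 'v) \<Rightarrow> ('p, 'e, 'v) prule \<Rightarrow> ('p, 'e, 'v) prule" where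
  "ground_inst \<theta> r =
     GRule (map_atom id id (Cst \<circ> inst \<theta>) (ghead r)) (gfun r)
           (map (\<lambda>p. (map_atom id id (Cst \<circ> inst \<theta>) (fst p), snd p)) (gbody r))"

definition ground_rules :: "('p, 'e, 'v) cgap \<Rightarrow> ('p, 'e, 'v) prule set" where
  "ground_rules \<Pi> = {ground_inst \<theta> r | \<theta> r. r \<in> gap_rules \<Pi>}"

text \<open>The annotated rule  q(v):mu <- p(v):mu  (annotation variable 0 plays mu).\<close>
definition choice_rule :: "'v \<Rightarrow> 'p \<Rightarrow> 'p \<Rightarrow> ('p, 'e, 'v) prule" where
  "choice_rule v p q = GRule (VAt q (Cst v)) (\<lambda>xs. xs ! 0) [(VAt p (Cst v), AVar 0)]"

definition coh :: "('p, 'e, 'v) cgap \<Rightarrow> ('p, 'e, 'v) interp \<Rightarrow> ('p, 'e, 'v) prule set" where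
  "coh \<Pi> I = ground_rules \<Pi> \<union>
     {choice_rule v (vc_body (vc_rule \<Pi>) ! i) (vc_heads (vc_rule \<Pi>) ! i) | v i.
        i < vc_size \<Pi> \<and> 0 < I (VAt (vc_body (vc_rule \<Pi>) ! i) v) \<and>
        I (VAt (vc_body (vc_rule \<Pi>) ! i) v) = I (VAt (vc_heads (vc_rule \<Pi>) ! i) v)}"

definition coherent :: "('p, 'e, 'v) cgap \<Rightarrow> ('p, 'e, 'v) interp \<Rightarrow> bool" where
  "coherent \<Pi> M \<longleftrightarrow> cgap_model \<Pi> M \<and> M = MM (coh \<Pi> M)"

text \<open>A state assigns to each vertex (player) an action in Q = {1..m}.\<close>
definition is_state :: "('p, 'e, 'v) cgap \<Rightarrow> ('v \<Rightarrow> nat) \<Rightarrow> bool" where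
  "is_state \<Pi> S \<longleftrightarrow> (\<forall>v. S v \<in> {1..vc_size \<Pi>})"

definition induced :: "('p, 'e, 'v) cgap \<Rightarrow> ('v \<Rightarrow> nat) \<Rightarrow> ('p, 'e, 'v) prule set" where
  "induced \<Pi> S = ground_rules \<Pi> \<union>
     {choice_rule v (vc_body (vc_rule \<Pi>) ! (S v - 1)) (vc_heads (vc_rule \<Pi>) ! (S v - 1)) | v. True}"

end

theory Submission
  imports Defs
begin

lemma aval_range: "wf_annot t \<Longrightarrow> (\<forall>x. 0 \<le> \<sigma> x \<and> \<sigma> x \<le> 1) \<Longrightarrow> 0 \<le> aval \<sigma> t \<and> aval \<sigma> t \<le> 1"
proof (induction \<sigma> t rule: aval.induct)
  case (3 \<sigma> f ts)
  have "set (map (aval \<sigma>) ts) \<subseteq> {0..1}" using 3 by auto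
  then show ?case using 3(2) by auto
qed auto

lemma one_model:
  assumes "\<forall>r\<in>P. wf_rule r"
  shows "gap_model P (\<lambda>_. 1)"
  unfolding gap_model_def is_interp_def sat_rule_def
proof (intro conjI ballI allI impI)
  fix r \<theta> and \<sigma> :: "nat \<Rightarrow> real"
  assume r: "r \<in> P" and s: "\<forall>x. 0 \<le> \<sigma> x \<and> \<sigma> x \<le> 1"
  have w: "wf_rule r" using assms r by auto
  have "set (map (\<lambda>p. aval \<sigma> (snd p)) (gbody r)) \<subseteq> {0..1}"
    using w s aval_range unfolding wf_rule_def by fastforce
  then show "gfun r (map (\<lambda>p. aval \<sigma> (snd p)) (gbody r)) \<le> 1"
    using w unfolding wf_rule_def by auto
qed auto

lemma MM_least:
  assumes "\<forall>r\<in>P. wf_rule r"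
  shows "gap_model P (MM P) \<and> (\<forall>J. gap_model P J \<longrightarrow> MM P \<le> J)"
proof -
  define L where "L = (\<lambda>A. INF J\<in>{J. gap_model P J}. J A)"
  have ne: "{J. gap_model P J} \<noteq> {}" using one_model[OF assms] by blast
  have bdd: "bdd_below ((\<lambda>J. J A) ` {J. gap_model P J})" for A
    by (rule bdd_belowI[where m=0]) (auto simp: gap_model_def is_interp_def)
  have low: "gap_model P J \<Longrightarrow> L A \<le> J A" for J A
    unfolding L_def by (rule cINF_lower[OF bdd]) auto
  have gr: "(\<And>J. gap_model P J \<Longrightarrow> c \<le> J A) \<Longrightarrow> c \<le> L A" for c A
    unfolding L_def by (rule cINF_greatest[OF ne]) auto
  have LM: "gap_model P L"
    unfolding gap_model_def is_interp_def
  proof (intro conjI allI ballI)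
    fix A
    show "0 \<le> L A" by (rule gr) (auto simp: gap_model_def is_interp_def)
    show "L A \<le> 1" using low[OF one_model[OF assms]] by simp
  next
    fix r assume r: "r \<in> P"
    show "sat_rule L r" unfolding sat_rule_def
    proof (intro allI impI)
      fix \<theta> \<sigma>
      assume s: "\<forall>x. 0 \<le> (\<sigma>::nat\<Rightarrow>real) x \<and> \<sigma> x \<le> 1"
        and b: "\<forall>p\<in>set (gbody r). aval \<sigma> (snd p) \<le> L (gatom \<theta> (fst p))"
      show "gfun r (map (\<lambda>p. aval \<sigma> (snd p)) (gbody r)) \<le> L (gatom \<theta> (ghead r))"
      proof (rule gr)
        fix J assume J: "gap_model P J"
        then have "sat_rule J r" using r by (auto simp: gap_model_def)
        moreover have "\<forall>p\<in>set (gbody r). aval \<sigma> (snd p) \<le> J (gatom \<theta> (fst p))"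
          using b low[OF J] by (meson order_trans)
        ultimately show "gfun r (map (\<lambda>p. aval \<sigma> (snd p)) (gbody r)) \<le> J (gatom \<theta> (ghead r))"
          using s unfolding sat_rule_def by blast
      qed
    qed
  qed
  have Lle: "gap_model P J \<Longrightarrow> L \<le> J" for J using low by (simp add: le_fun_def)
  have "MM P = L" unfolding MM_def
  proof (rule the_equality)
    show "gap_model P L \<and> (\<forall>J. gap_model P J \<and> J \<le> L \<longrightarrow> J = L)"
      using LM Lle by (auto intro: order.antisym)
  next
    fix I assume "gap_model P I \<and> (\<forall>J. gap_model P J \<and> J \<le> I \<longrightarrow> J = I)"
    then show "I = L" using LM Lle by blast
  qed
  then show ?thesis using LM Lle by simp
qed

lemma sat_choice:
  assumes "is_interp I"
  shows "sat_rule I (choice_rule v p q) \<longleftrightarrow> I (VAt p v) \<le> I (VAt q v)"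
proof
  assume a: "sat_rule I (choice_rule v p q)"
  define \<sigma> where "\<sigma> = (\<lambda>_::nat. I (VAt p v))"
  have "\<forall>x. 0 \<le> \<sigma> x \<and> \<sigma> x \<le> 1" using assms by (simp add: \<sigma>_def is_interp_def)
  then show "I (VAt p v) \<le> I (VAt q v)" using a
    unfolding sat_rule_def choice_rule_def by (auto simp: gatom_def \<sigma>_def)
next
  assume "I (VAt p v) \<le> I (VAt q v)"
  then show "sat_rule I (choice_rule v p q)"
    unfolding sat_rule_def choice_rule_def by (auto simp: gatom_def)
qed

lemma gatom_ground: "gatom \<theta>' (map_atom id id (Cst \<circ> inst \<theta>) a) = gatom \<theta> a"
  by (cases a) (auto simp: gatom_def)

lemma gatom_ground2: "gatom \<theta>' (map_atom id id (\<lambda>x. Cst (inst \<theta> x)) a) = gatom \<theta> a"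
  by (cases a) (auto simp: gatom_def)

lemma sat_ground: "sat_rule I (ground_inst \<theta> r) \<longleftrightarrow>
  (\<forall>\<sigma>. (\<forall>x. 0 \<le> \<sigma> x \<and> \<sigma> x \<le> 1) \<longrightarrow>
        (\<forall>p\<in>set (gbody r). aval \<sigma> (snd p) \<le> I (gatom \<theta> (fst p))) \<longrightarrow>
        gfun r (map (\<lambda>p. aval \<sigma> (snd p)) (gbody r)) \<le> I (gatom \<theta> (ghead r)))"
  unfolding sat_rule_def ground_inst_def by (simp add: gatom_ground2 comp_def)

lemma sat_from_ground: "(\<forall>\<theta>. sat_rule I (ground_inst \<theta> r)) \<Longrightarrow> sat_rule I r"
  unfolding sat_ground by (simp add: sat_rule_def)

lemma wf_ground: "wf_rule r \<Longrightarrow> wf_rule (ground_inst \<theta> r)"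
  unfolding wf_rule_def ground_inst_def by (auto simp: comp_def)

lemma wf_choice: "wf_rule (choice_rule v p q)"
  unfolding wf_rule_def choice_rule_def by (auto simp: length_Suc_conv)

lemma sat_mono_rule:
  assumes "sat_rule M r" "J \<le> M" "\<And>\<theta>. J (gatom \<theta> (ghead r)) = M (gatom \<theta> (ghead r))"
  shows "sat_rule J r"
  using assms unfolding sat_rule_def le_fun_def by (metis order_trans)

lemma head_ground:
  assumes "\<forall>p\<in>set hs. \<forall>t. ghead r \<noteq> VAt p t" "q \<in> set hs"
  shows "gatom \<theta>' (ghead (ground_inst \<theta> r)) \<noteq> VAt q w"
proof -
  have "gatom \<theta>' (ghead (ground_inst \<theta> r)) = gatom \<theta> (ghead r)"
    by (simp add: ground_inst_def gatom_ground)
  moreover have "gatom \<theta> (ghead r) \<noteq> VAt q w"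
    using assms by (cases "ghead r") (auto simp: gatom_def)
  ultimately show ?thesis by simp
qed

theorem mainTheorem2:
  fixes \<Pi> :: "('p, 'e, 'v::finite) cgap" and S :: "'v \<Rightarrow> nat"
  assumes "wf_cgap \<Pi>"
    and "\<forall>r\<in>gap_rules \<Pi>. \<forall>p\<in>set (vc_heads (vc_rule \<Pi>)). \<forall>t. ghead r \<noteq> VAt p t"
    and "is_state \<Pi> S"
  shows "coherent \<Pi> (MM (induced \<Pi> S))"
proof -
  define hs where "hs = vc_heads (vc_rule \<Pi>)"
  define bs where "bs = vc_body (vc_rule \<Pi>)"
  define P where "P = induced \<Pi> S"
  define M where "M = MM P"
  have wfc: "finite (gap_rules \<Pi>)" "\<forall>r\<in>gap_rules \<Pi>. wf_rule r" "length bs = length hs" "distinct hs"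
    using assms(1) unfolding wf_cgap_def hs_def bs_def by blast+
  have Sl: "S v - 1 < length hs" for v
  proof -
    have "S v \<in> {1..vc_size \<Pi>}" using assms(3) unfolding is_state_def by (rule spec)
    then show ?thesis by (auto simp: vc_size_def hs_def)
  qed
  have hd: "\<forall>r\<in>gap_rules \<Pi>. \<forall>p\<in>set hs. \<forall>t. ghead r \<noteq> VAt p t" using assms(2) hs_def by simp
  have gr_in: "ground_inst \<theta> r \<in> ground_rules \<Pi>" if "r \<in> gap_rules \<Pi>" for \<theta> r
    using that unfolding ground_rules_def by blast
  have wfgr: "\<forall>r\<in>ground_rules \<Pi>. wf_rule r"
    using wfc(2) wf_ground unfolding ground_rules_def by blast
  have wfP: "\<forall>r\<in>P. wf_rule r"
    using wfgr wf_choice unfolding P_def induced_def by auto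
  have MMP: "gap_model P M" "\<And>J. gap_model P J \<Longrightarrow> M \<le> J"
    using MM_least[OF wfP] M_def by auto
  have Mi: "is_interp M" using MMP(1) gap_model_def by blast
  have ch_in: "choice_rule v (bs ! (S v - 1)) (hs ! (S v - 1)) \<in> P" for v
    unfolding P_def induced_def hs_def bs_def by blast
  have b: "M (VAt (bs ! (S v - 1)) v) \<le> M (VAt (hs ! (S v - 1)) v)" for v
    using MMP(1) ch_in[of v] sat_choice[OF Mi] unfolding gap_model_def by blast
  define J where "J = (\<lambda>A. case A of VAt q v \<Rightarrow> (if q \<in> set hs then
        (if q = hs ! (S v - 1) then M (VAt (bs ! (S v - 1)) v) else 0) else M A)
      | _ \<Rightarrow> M A)"
  have JM: "J \<le> M"
    unfolding le_fun_def
  proof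
    fix A show "J A \<le> M A"
      using b Mi by (cases A) (auto simp: J_def is_interp_def)
  qed
  have Ji: "is_interp J"
    unfolding is_interp_def
  proof
    fix A show "0 \<le> J A \<and> J A \<le> 1"
      using Mi JM by (cases A) (auto simp: J_def is_interp_def le_fun_def split: if_splits)
  qed
  have "gap_model P J"
    unfolding gap_model_def
  proof (intro conjI ballI Ji)
    fix r assume r: "r \<in> P"
    show "sat_rule J r"
    proof (cases "r \<in> ground_rules \<Pi>")
      case True
      then obtain \<theta> r0 where r0: "r = ground_inst \<theta> r0" "r0 \<in> gap_rules \<Pi>"
        unfolding ground_rules_def by blast
      show ?thesis
      proof (rule sat_mono_rule[OF _ JM])
        show "sat_rule M r" using MMP(1) r by (auto simp: gap_model_def)
        fix \<theta>' show "J (gatom \<theta>' (ghead r)) = M (gatom \<theta>' (ghead r))"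
          using head_ground[of hs r0] hd r0
          by (cases "gatom \<theta>' (ghead r)") (auto simp: J_def)
      qed
    next
      case False
      then obtain w where w: "r = choice_rule w (bs ! (S w - 1)) (hs ! (S w - 1))"
        using r unfolding P_def induced_def hs_def bs_def by blast
      have "hs ! (S w - 1) \<in> set hs" using Sl by simp
      then have "J (VAt (hs ! (S w - 1)) w) = M (VAt (bs ! (S w - 1)) w)"
        by (simp add: J_def)
      moreover have "J (VAt (bs ! (S w - 1)) w) \<le> M (VAt (bs ! (S w - 1)) w)"
        using JM by (simp add: le_fun_def)
      ultimately show ?thesis using w sat_choice[OF Ji] by simp
    qed
  qed
  then have "M \<le> J" using MMP(2) by blast
  then have MJ: "M = J" using JM by (rule order.antisym)
  have c: "M (VAt (hs ! (S v - 1)) v) = M (VAt (bs ! (S v - 1)) v)" for v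
    using Sl[of v] by (subst MJ) (simp add: J_def)
  have d: "M (VAt q v) = 0" if "q \<in> set hs" "q \<noteq> hs ! (S v - 1)" for q v
    using that by (subst MJ) (simp add: J_def)
  have cgm: "cgap_model \<Pi> M"
    unfolding cgap_model_def
  proof (intro conjI ballI Mi)
    fix r assume "r \<in> gap_rules \<Pi>"
    then have "\<forall>\<theta>. sat_rule M (ground_inst \<theta> r)"
      using gr_in MMP(1) unfolding gap_model_def P_def induced_def by blast
    then show "sat_rule M r" by (rule sat_from_ground)
  next
    show "sat_vc M (vc_rule \<Pi>)"
      unfolding sat_vc_def hs_def[symmetric] bs_def[symmetric]
    proof
      fix v
      show "\<exists>i<length hs. M (VAt (hs ! i) v) = M (VAt (bs ! i) v) \<and>
          (\<forall>j<length hs. j \<noteq> i \<longrightarrow> M (VAt (hs ! j) v) = 0)"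
      proof (intro exI conjI allI impI)
        show "S v - 1 < length hs" by (rule Sl)
        show "M (VAt (hs ! (S v - 1)) v) = M (VAt (bs ! (S v - 1)) v)" by (rule c)
        fix j assume j: "j < length hs" "j \<noteq> S v - 1"
        then have "hs ! j \<noteq> hs ! (S v - 1)" using wfc(4) Sl[of v] nth_eq_iff_index_eq by blast
        then show "M (VAt (hs ! j) v) = 0" using d j(1) by simp
      qed
    qed
  qed
  define C where "C = coh \<Pi> M"
  have C_eq: "C = ground_rules \<Pi> \<union> {choice_rule v (bs ! i) (hs ! i) | v i.
        i < length hs \<and> 0 < M (VAt (bs ! i) v) \<and> M (VAt (bs ! i) v) = M (VAt (hs ! i) v)}"
    unfolding C_def coh_def hs_def bs_def vc_size_def by simp
  have wfC: "\<forall>r\<in>C. wf_rule r" using wfgr wf_choice unfolding C_eq by auto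
  define M' where "M' = MM C"
  have MMC: "gap_model C M'" "\<And>J. gap_model C J \<Longrightarrow> M' \<le> J"
    using MM_least[OF wfC] M'_def by auto
  have M'i: "is_interp M'" using MMC(1) gap_model_def by blast
  have "gap_model C M"
    unfolding gap_model_def
  proof (intro conjI ballI Mi)
    fix r assume r: "r \<in> C"
    show "sat_rule M r"
    proof (cases "r \<in> ground_rules \<Pi>")
      case True then show ?thesis using MMP(1) unfolding gap_model_def P_def induced_def by blast
    next
      case False then show ?thesis using r sat_choice[OF Mi] unfolding C_eq by auto
    qed
  qed
  then have M'M: "M' \<le> M" using MMC(2) by blast
  have "gap_model P M'"
    unfolding gap_model_def
  proof (intro conjI ballI M'i)
    fix r assume r: "r \<in> P"
    show "sat_rule M' r"
    proof (cases "r \<in> ground_rules \<Pi>")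
      case True then show ?thesis using MMC(1) unfolding gap_model_def C_eq by blast
    next
      case False
      then obtain w where w: "r = choice_rule w (bs ! (S w - 1)) (hs ! (S w - 1))"
        using r unfolding P_def induced_def hs_def bs_def by blast
      show ?thesis
      proof (cases "M (VAt (bs ! (S w - 1)) w) = 0")
        case True
        then have "M' (VAt (bs ! (S w - 1)) w) \<le> 0" using M'M by (metis le_fun_def)
        moreover have "0 \<le> M' (VAt (hs ! (S w - 1)) w)" using M'i by (simp add: is_interp_def)
        ultimately show ?thesis using w sat_choice[OF M'i] by simp
      next
        case False
        then have "0 < M (VAt (bs ! (S w - 1)) w)" using Mi by (simp add: is_interp_def less_le)
        then have "r \<in> C" unfolding C_eq w using Sl[of w] c[of w]
          by (intro UnI2 CollectI exI[of _ w] exI[of _ "S w - 1"]) simp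
        then show ?thesis using MMC(1) unfolding gap_model_def by blast
      qed
    qed
  qed
  then have "M \<le> M'" using MMP(2) by blast
  then have "M = M'" using M'M by (rule order.antisym)
  then show ?thesis
    unfolding coherent_def using cgm M_def P_def M'_def C_def by simp
qed

end
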